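(* Let $\mathcal{K}$ be a learning space (respectively, a well-graded $\cup$-closed family) on a domain $Q=\bigcup\mathcal{K}$ with $|Q|\ge 2$, and let $Q'$ be a proper non-empty subset of $Q$. Then: (i) the projection $\mathcal{K}_{|Q'}$ is a learning space (respectively, a well-graded $\cup$-closed family); (ii) in either case, every $Q'$-child of $\mathcal{K}$ is a well-graded $\cup$-closed family.
   Context: All sets are finite. $d(K,L)=|K\triangle L|$. A family is well-graded if any two distinct members $K,L$ are joined by a sequence $K_0=K,\dots,K_n=L$ of members with $n=d(K,L)$ and $d(K_i,K_{i+1})=1$. A family is $\cup$-closed if the union of any non-empty subfamily belongs to it. A knowledge structure is a family $\mathcal{K}$ of subsets of $Q=\bigcup\mathcal{K}\neq\varnothing$ with $\varnothing\in\mathcal{K}$. A learning space is a knowledge structure satisfying: [L1] for $K\subset L$ in $\mathcal{K}$ with $|L\setminus K|=n$ there is a chain $K=K_0\subset\dots\subset K_n=L$ with $K_{i+1}=K_i\cup\{q_i\}\in\mathcal{K}$, $q_i\notin K_i$; [L2] if $K\subset L$ in $\mathcal{K}$ and $K\cup\{q\}\in\mathcal{K}$ with $q\notin K$ then $L\cup\{q\}\in\mathcal{K}$. For $Q'\subset Q$: $K\sim L$ iff $K\cap Q'=L\cap Q'$, $[K]$ the equivalence class of $K$; projection $\mathcal{K}_{|Q'}=\{K\cap Q':K\in\mathcal{K}\}$; the $Q'$-child of $\mathcal{K}$ determined by $K$ is $\mathcal{K}_{[K]}=\{L\setminus\bigcap[K]: L\in\mathcal{K}, L\sim K\}$ (it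 may equal $\{\varnothing\}$, which is regarded as well-graded and $\cup$-closed). *)

theory Defs
  imports Main
begin

definition sdist :: "'a set \<Rightarrow> 'a set \<Rightarrow> nat" where
  "sdist K L = card ((K - L) \<union> (L - K))"

definition well_graded :: "'a set set \<Rightarrow> bool" where
  "well_graded F \<longleftrightarrow> (\<forall>K\<in>F. \<forall>L\<in>F. K \<noteq> L \<longrightarrow>
     (\<exists>f :: nat \<Rightarrow> 'a set. f 0 = K \<and> f (sdist K L) = L \<and>
        (\<forall>i\<le>sdist K L. f i \<in> F) \<and>
        (\<forall>i<sdist K L. sdist (f i) (f (Suc i)) = 1)))"

definition union_closed :: "'a set set \<Rightarrow> bool" where
  "union_closed F \<longleftrightarrow> (\<forall>S. S \<subseteq> F \<and> S \<noteq> {} \<longrightarrow> \<Union>S \<in> F)"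

definition knowledge_structure :: "'a set set \<Rightarrow> bool" where
  "knowledge_structure F \<longleftrightarrow> \<Union>F \<noteq> {} \<and> {} \<in> F"

definition axiom_L1 :: "'a set set \<Rightarrow> bool" where
  "axiom_L1 F \<longleftrightarrow> (\<forall>K\<in>F. \<forall>L\<in>F. K \<subset> L \<longrightarrow>
     (\<exists>f :: nat \<Rightarrow> 'a set. f 0 = K \<and> f (card (L - K)) = L \<and>
        (\<forall>i\<le>card (L - K). f i \<in> F) \<and>
        (\<forall>i<card (L - K). \<exists>q. q \<notin> f i \<and> f (Suc i) = insert q (f i))))"

definition axiom_L2 :: "'a set set \<Rightarrow> bool" where
  "axiom_L2 F \<longleftrightarrow> (\<forall>K\<in>F. \<forall>L\<in>F. \<forall>q. K \<subset> L \<and> q \<notin> K \<and> insert q K \<in> F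
      \<longrightarrow> insert q L \<in> F)"

definition learning_space :: "'a set set \<Rightarrow> bool" where
  "learning_space F \<longleftrightarrow> knowledge_structure F \<and> axiom_L1 F \<and> axiom_L2 F"

definition projection :: "'a set set \<Rightarrow> 'a set \<Rightarrow> 'a set set" where
  "projection F Q' = (\<lambda>K. K \<inter> Q') ` F"

definition equiv_class :: "'a set set \<Rightarrow> 'a set \<Rightarrow> 'a set \<Rightarrow> 'a set set" where
  "equiv_class F Q' K = {L \<in> F. L \<inter> Q' = K \<inter> Q'}"

definition child :: "'a set set \<Rightarrow> 'a set \<Rightarrow> 'a set \<Rightarrow> 'a set set" where
  "child F Q' K = (\<lambda>L. L - \<Inter>(equiv_class F Q' K)) ` equiv_class F Q' K"

end

theory Submission
  imports Defs
begin


definition sd :: "'a set \<Rightarrow> 'a set \<Rightarrow> 'a set" where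
  "sd X Y = (X - Y) \<union> (Y - X)"

lemma sdist_sd: "sdist K L = card (sd K L)" by (simp add: sdist_def sd_def)
lemma sd_flip: "sd (sd K {y}) L = (if y \<in> sd K L then sd K L - {y} else insert y (sd K L))"
  by (auto simp: sd_def)
lemma sd_sd: "sd K (sd K M) = M" by (auto simp: sd_def)
lemma sd_single: "sd K (sd K {y}) = {y}" by (auto simp: sd_def)
lemma finite_sd: "finite K \<Longrightarrow> finite L \<Longrightarrow> finite (sd K L)" by (simp add: sd_def)
lemma sd_empty_iff: "sd K L = {} \<longleftrightarrow> K = L" by (auto simp: sd_def)
lemma sd_comm: "sd K L = sd L K" by (auto simp: sd_def)

lemma sdist_zero_iff: "finite K \<Longrightarrow> finite L \<Longrightarrow> sdist K L = 0 \<longleftrightarrow> K = L"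
  by (simp add: sdist_sd finite_sd sd_empty_iff)

lemma sdist_tri:
  assumes "finite A" "finite B" "finite C"
  shows "sdist A C \<le> sdist A B + sdist B C"
proof -
  have "sd A C \<subseteq> sd A B \<union> sd B C" by (auto simp: sd_def)
  hence "card (sd A C) \<le> card (sd A B \<union> sd B C)"
    by (intro card_mono) (auto simp: finite_sd assms)
  also have "\<dots> \<le> card (sd A B) + card (sd B C)" by (rule card_Un_le)
  finally show ?thesis by (simp add: sdist_sd)
qed

lemma sdist_step_in:
  assumes "finite K" "finite L" "y \<in> sd K L"
  shows "sdist (sd K {y}) L = sdist K L - 1"
  using assms by (simp add: sdist_sd sd_flip finite_sd)

lemma sdist_step_out:
  assumes "finite K" "finite L" "y \<notin> sd K L"
  shows "sdist (sd K {y}) L = sdist K L + 1"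
  using assms by (simp add: sdist_sd sd_flip finite_sd)

lemma sdist_single: "sdist K (sd K {y}) = 1"
  by (simp add: sdist_sd sd_single)

definition wgb :: "'a set set \<Rightarrow> bool" where
  "wgb F \<longleftrightarrow> (\<forall>K\<in>F. \<forall>L\<in>F. K \<noteq> L \<longrightarrow> (\<exists>y\<in>sd K L. sd K {y} \<in> F))"

lemma wgb_imp_wg:
  assumes fin: "\<forall>X\<in>F. finite X" and w: "wgb F"
  shows "well_graded F"
proof -
  have main: "\<forall>K L. K\<in>F \<longrightarrow> L\<in>F \<longrightarrow> sdist K L = n \<longrightarrow> (\<exists>f :: nat \<Rightarrow> 'a set. f 0 = K \<and> f n = L
      \<and> (\<forall>i\<le>n. f i \<in> F) \<and> (\<forall>i<n. sdist (f i) (f (Suc i)) = 1))" for n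
  proof (induction n)
    case 0
    show ?case
    proof (intro allI impI)
      fix K L assume "K \<in> F" "L \<in> F" "sdist K L = 0"
      hence "K = L" using fin sdist_zero_iff by blast
      thus "\<exists>f :: nat \<Rightarrow> 'a set. f 0 = K \<and> f 0 = L
      \<and> (\<forall>i\<le>0. f i \<in> F) \<and> (\<forall>i<0. sdist (f i) (f (Suc i)) = 1)"
        using \<open>K \<in> F\<close> by (intro exI[of _ "\<lambda>_. K"]) auto
    qed
  next
    case (Suc m)
    show ?case
    proof (intro allI impI)
      fix K L assume K: "K \<in> F" and L: "L \<in> F" and d: "sdist K L = Suc m"
      hence "K \<noteq> L" using fin sdist_zero_iff by fastforce
      then obtain y where y: "y \<in> sd K L" and M: "sd K {y} \<in> F"
        using w K L unfolding wgb_def by blast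
      have "sdist (sd K {y}) L = m" using sdist_step_in[OF _ _ y] fin K L d by simp
      from Suc.IH[rule_format, OF M L this] obtain g :: "nat \<Rightarrow> 'a set" where g: "g 0 = sd K {y}" "g m = L"
        "\<forall>i\<le>m. g i \<in> F" "\<forall>i<m. sdist (g i) (g (Suc i)) = 1"
        by blast
      define f where "f = (\<lambda>i. if i = 0 then K else g (i - 1))"
      have "f 0 = K" "f (Suc m) = L" using g by (auto simp: f_def)
      moreover have "\<forall>i\<le>Suc m. f i \<in> F"
      proof (intro allI impI)
        fix i assume "i \<le> Suc m" thus "f i \<in> F" using g K by (cases i) (auto simp: f_def)
      qed
      moreover have "\<forall>i<Suc m. sdist (f i) (f (Suc i)) = 1"
      proof (intro allI impI)
        fix i assume "i < Suc m" thus "sdist (f i) (f (Suc i)) = 1"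
          using g by (cases i) (auto simp: f_def sdist_single)
      qed
      ultimately show "\<exists>f :: nat \<Rightarrow> 'a set. f 0 = K \<and> f (Suc m) = L
      \<and> (\<forall>i\<le>Suc m. f i \<in> F) \<and> (\<forall>i<Suc m. sdist (f i) (f (Suc i)) = 1)" by blast
    qed
  qed
  show ?thesis unfolding well_graded_def using main by blast
qed

lemma wg_imp_wgb:
  assumes fin: "\<forall>X\<in>F. finite X" and w: "well_graded F"
  shows "wgb F"
  unfolding wgb_def
proof (intro ballI impI)
  fix K L assume K: "K \<in> F" and L: "L \<in> F" and ne: "K \<noteq> L"
  define n where "n = sdist K L"
  from w[unfolded well_graded_def, rule_format, OF K L ne, folded n_def]
  obtain f :: "nat \<Rightarrow> 'a set" where f: "f 0 = K" "f n = L" "\<forall>i\<le>n. f i \<in> F"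
     "\<forall>i<n. sdist (f i) (f (Suc i)) = 1"
    by blast
  have "finite K" "finite L" using fin K L by auto
  hence npos: "n > 0" using ne sdist_zero_iff[of K L] unfolding n_def by simp
  have down: "\<forall>j. j \<le> n \<longrightarrow> sdist (f (n - j)) L \<le> j"
  proof (intro allI)
    fix j show "j \<le> n \<longrightarrow> sdist (f (n - j)) L \<le> j"
    proof (induction j)
      case 0 show ?case using f(2) by (simp add: sdist_def)
    next
      case (Suc j)
      show ?case
      proof
        assume j: "Suc j \<le> n"
        have e: "Suc (n - Suc j) = n - j" using j by simp
        have "sdist (f (n - Suc j)) L \<le> sdist (f (n - Suc j)) (f (n - j)) + sdist (f (n - j)) L"
          by (rule sdist_tri) (use fin f(3) L in auto)
        also have "sdist (f (n - Suc j)) (f (n - j)) = 1" using f(4)[rule_format, of "n - Suc j"] j e by simp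
        finally show "sdist (f (n - Suc j)) L \<le> Suc j" using Suc.IH j by simp
      qed
    qed
  qed
  have M1: "sdist (f 1) L \<le> n - 1" using down[rule_format, of "n - 1"] npos by simp
  have "sdist K (f 1) = 1" using f(4) npos f(1) by auto
  hence "card (sd K (f 1)) = 1" by (simp add: sdist_sd)
  then obtain y where y: "sd K (f 1) = {y}" using card_1_singletonE by blast
  hence f1: "f 1 = sd K {y}" by (metis sd_sd)
  have "y \<in> sd K L"
  proof (rule ccontr)
    assume "y \<notin> sd K L"
    hence "sdist (f 1) L = n + 1" using f1 sdist_step_out[of K L y] fin K L n_def by simp
    thus False using M1 by simp
  qed
  moreover have "sd K {y} \<in> F" using f1 f(3)[rule_format, of 1] npos by simp
  ultimately show "\<exists>y\<in>sd K L. sd K {y} \<in> F" by blast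
qed



lemma chain_mono:
  assumes st: "\<forall>i<n. \<exists>q. q \<notin> f i \<and> f (Suc i) = insert q (f i)"
  shows "i \<le> j \<Longrightarrow> j \<le> n \<Longrightarrow> f i \<subseteq> (f j :: 'a set)"
proof (induction j)
  case 0 thus ?case by simp
next
  case (Suc j)
  show ?case
  proof (cases "i = Suc j")
    case True thus ?thesis by simp
  next
    case False
    hence "f i \<subseteq> f j" using Suc by simp
    moreover have "j < n" using Suc.prems by simp
    then obtain q where "f (Suc j) = insert q (f j)" using st by blast
    ultimately show ?thesis by blast
  qed
qed

lemma ls_union2:
  assumes L1: "axiom_L1 F" and L2: "axiom_L2 F" and e: "{} \<in> F"
    and K: "K \<in> F" and L: "L \<in> F" and fK: "finite K"
  shows "L \<union> K \<in> F"
proof (cases "K = {}")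
  case True thus ?thesis using L by simp
next
  case False
  hence "{} \<subset> K" by blast
  from L1[unfolded axiom_L1_def, rule_format, OF e K this]
  obtain f :: "nat \<Rightarrow> 'a set" where f: "f 0 = {}" "f (card K) = K" "\<forall>i\<le>card K. f i \<in> F"
    "\<forall>i<card K. \<exists>q. q \<notin> f i \<and> f (Suc i) = insert q (f i)" by auto
  have "\<forall>i. i \<le> card K \<longrightarrow> L \<union> f i \<in> F"
  proof
    fix i show "i \<le> card K \<longrightarrow> L \<union> f i \<in> F"
    proof (induction i)
      case 0 thus ?case using f L by simp
    next
      case (Suc i)
      show ?case
      proof
        assume i: "Suc i \<le> card K"
        hence IH: "L \<union> f i \<in> F" using Suc.IH by simp
        have fi: "f i \<in> F" and fs: "f (Suc i) \<in> F" using f(3) i by auto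
        have "i < card K" using i by simp
        then obtain q where q: "q \<notin> f i" "f (Suc i) = insert q (f i)" using f(4) by blast
        have eq: "L \<union> f (Suc i) = insert q (L \<union> f i)" using q by auto
        show "L \<union> f (Suc i) \<in> F"
        proof (cases "f i = L \<union> f i")
          case True thus ?thesis using eq q fs by simp
        next
          case False
          hence "f i \<subset> L \<union> f i" by blast
          have "insert q (L \<union> f i) \<in> F"
            by (rule L2[unfolded axiom_L2_def, rule_format, OF fi IH]) (use q fs False in auto)
          thus ?thesis using eq by simp
        qed
      qed
    qed
  qed
  hence "L \<union> f (card K) \<in> F" by simp
  thus ?thesis using f(2) by simp
qed

lemma ls_union_closed:
  assumes fF: "finite F" and L1: "axiom_L1 F" and L2: "axiom_L2 F" and e: "{} \<in> F"
    and fin: "\<forall>X\<in>F. finite X"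
  shows "union_closed F"
  unfolding union_closed_def
proof (intro allI impI)
  fix S assume "S \<subseteq> F \<and> S \<noteq> {}"
  hence S: "S \<subseteq> F" "S \<noteq> {}" by auto
  have fS: "finite S" using S fF finite_subset by blast
  have "finite S \<Longrightarrow> S \<noteq> {} \<Longrightarrow> S \<subseteq> F \<Longrightarrow> \<Union>S \<in> F"
  proof (induction S rule: finite_ne_induct)
    case (singleton x) thus ?case by simp
  next
    case (insert x S)
    hence "\<Union>S \<in> F" "x \<in> F" by auto
    hence "\<Union>S \<union> x \<in> F" using ls_union2[OF L1 L2 e \<open>x \<in> F\<close> \<open>\<Union>S \<in> F\<close>] fin by simp
    thus ?case by (simp add: Un_commute)
  qed
  thus "\<Union>S \<in> F" using fS S by blast
qed

lemma ls_wgb: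
  assumes fF: "finite F" and L1: "axiom_L1 F" and L2: "axiom_L2 F" and e: "{} \<in> F"
    and fin: "\<forall>X\<in>F. finite X"
  shows "wgb F"
  unfolding wgb_def
proof (intro ballI impI)
  fix K L assume K: "K \<in> F" and L: "L \<in> F" and ne: "K \<noteq> L"
  have KL: "K \<union> L \<in> F" using ls_union2[OF L1 L2 e L K] fin L by simp
  have fK: "finite K" "finite L" using fin K L by auto
  show "\<exists>y\<in>sd K L. sd K {y} \<in> F"
  proof (cases "L \<subseteq> K")
    case False
    hence sub: "K \<subset> K \<union> L" by blast
    define n where "n = card (K \<union> L - K)"
    have npos: "n > 0" using False fK unfolding n_def by (auto simp add: card_gt_0_iff)
    from L1[unfolded axiom_L1_def, rule_format, OF K KL sub, folded n_def]
    obtain f :: "nat \<Rightarrow> 'a set" where f: "f 0 = K" "f n = K \<union> L" "\<forall>i\<le>n. f i \<in> F"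
      "\<forall>i<n. \<exists>q. q \<notin> f i \<and> f (Suc i) = insert q (f i)" by auto
    from f(4)[rule_format, OF npos] obtain q where q: "q \<notin> K" "f 1 = insert q K" using f(1) by auto
    have "f 1 \<subseteq> f n" using chain_mono[OF f(4), of 1 n] npos by simp
    hence "q \<in> sd K L" using q f(2) by (auto simp: sd_def)
    moreover have "sd K {q} = f 1" using q by (auto simp: sd_def)
    moreover have "f 1 \<in> F" using f(3) npos by simp
    ultimately show ?thesis by metis
  next
    case True
    hence sub: "L \<subset> K" using ne by blast
    define n where "n = card (K - L)"
    have npos: "n > 0" using sub fK unfolding n_def by (auto simp add: card_gt_0_iff)
    from L1[unfolded axiom_L1_def, rule_format, OF L K sub, folded n_def]
    obtain f :: "nat \<Rightarrow> 'a set" where f: "f 0 = L" "f n = K" "\<forall>i\<le>n. f i \<in> F"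
      "\<forall>i<n. \<exists>q. q \<notin> f i \<and> f (Suc i) = insert q (f i)" by blast
    have sn: "Suc (n - 1) = n" using npos by simp
    have "n - 1 < n" using npos by simp
    from f(4)[rule_format, OF this] obtain q where q: "q \<notin> f (n - 1)" "f (Suc (n - 1)) = insert q (f (n - 1))"
      by blast
    have Lp: "L \<subseteq> f (n - 1)" using chain_mono[OF f(4), of 0 "n - 1"] f(1) by simp
    have "q \<in> sd K L" using q sn f(2) Lp by (auto simp: sd_def)
    moreover have "sd K {q} = f (n - 1)" using q sn f(2) by (auto simp: sd_def)
    moreover have "f (n - 1) \<in> F" using f(3) by simp
    ultimately show ?thesis by metis
  qed
qed

lemma wgb_uc_L1:
  assumes fin: "\<forall>X\<in>F. finite X" and w: "wgb F"
  shows "axiom_L1 F"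
proof -
  have main: "\<forall>K. K\<in>F \<longrightarrow> L\<in>F \<longrightarrow> K \<subseteq> L \<longrightarrow> card (L - K) = n \<longrightarrow> (\<exists>f :: nat \<Rightarrow> 'a set. f 0 = K \<and> f n = L
      \<and> (\<forall>i\<le>n. f i \<in> F) \<and> (\<forall>i<n. \<exists>q. q \<notin> f i \<and> f (Suc i) = insert q (f i)))" for n L
  proof (induction n)
    case 0
    show ?case
    proof (intro allI impI)
      fix K assume "K \<in> F" "L \<in> F" "K \<subseteq> L" "card (L - K) = 0"
      hence "K = L" using fin by (metis Diff_eq_empty_iff card_0_eq finite_Diff subset_antisym)
      thus "\<exists>f :: nat \<Rightarrow> 'a set. f 0 = K \<and> f 0 = L
      \<and> (\<forall>i\<le>0. f i \<in> F) \<and> (\<forall>i<0. \<exists>q. q \<notin> f i \<and> f (Suc i) = insert q (f i))"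
        using \<open>K \<in> F\<close> by (intro exI[of _ "\<lambda>_. K"]) auto
    qed
  next
    case (Suc m)
    show ?case
    proof (intro allI impI)
      fix K assume K: "K \<in> F" and L: "L \<in> F" and sub: "K \<subseteq> L" and d: "card (L - K) = Suc m"
      hence "K \<noteq> L" by auto
      from w[unfolded wgb_def, rule_format, OF K L this] obtain y where y: "y \<in> sd K L" and M: "sd K {y} \<in> F"
        by blast
      have yy: "y \<in> L" "y \<notin> K" using y sub by (auto simp: sd_def)
      have Meq: "sd K {y} = insert y K" using yy by (auto simp: sd_def)
      have "L - insert y K = (L - K) - {y}" by auto
      hence "card (L - insert y K) = m" using d yy fin L by (simp add: card_Diff_singleton)
      moreover have "insert y K \<subseteq> L" using yy sub by blast
      ultimately have "\<exists>g :: nat \<Rightarrow> 'a set. g 0 = insert y K \<and> g m = L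
      \<and> (\<forall>i\<le>m. g i \<in> F) \<and> (\<forall>i<m. \<exists>q. q \<notin> g i \<and> g (Suc i) = insert q (g i))"
        using Suc.IH M[unfolded Meq] L by simp
      then obtain g :: "nat \<Rightarrow> 'a set" where g: "g 0 = insert y K" "g m = L"
        "\<forall>i\<le>m. g i \<in> F" "\<forall>i<m. \<exists>q. q \<notin> g i \<and> g (Suc i) = insert q (g i)"
        by blast
      define f where "f = (\<lambda>i. if i = 0 then K else g (i - 1))"
      have "f 0 = K" "f (Suc m) = L" using g by (auto simp: f_def)
      moreover have "\<forall>i\<le>Suc m. f i \<in> F"
      proof (intro allI impI)
        fix i assume "i \<le> Suc m" thus "f i \<in> F" using g K by (cases i) (auto simp: f_def)
      qed
      moreover have "\<forall>i<Suc m. \<exists>q. q \<notin> f i \<and> f (Suc i) = insert q (f i)"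
      proof (intro allI impI)
        fix i assume i: "i < Suc m" show "\<exists>q. q \<notin> f i \<and> f (Suc i) = insert q (f i)"
        proof (cases i)
          case 0 thus ?thesis using g yy by (intro exI[of _ y]) (simp add: f_def)
        next
          case (Suc j)
          hence "j < m" using i by simp
          from g(4)[rule_format, OF this] obtain q where "q \<notin> g j" "g (Suc j) = insert q (g j)" by blast
          thus ?thesis using Suc by (intro exI[of _ q]) (simp add: f_def)
        qed
      qed
      ultimately show "\<exists>f :: nat \<Rightarrow> 'a set. f 0 = K \<and> f (Suc m) = L
      \<and> (\<forall>i\<le>Suc m. f i \<in> F) \<and> (\<forall>i<Suc m. \<exists>q. q \<notin> f i \<and> f (Suc i) = insert q (f i))" by (intro exI[of _ f]) simp
    qed
  qed
  show ?thesis unfolding axiom_L1_def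
  proof (intro ballI impI)
    fix K L assume "K \<in> F" "L \<in> F" "K \<subset> L"
    thus "\<exists>f :: nat \<Rightarrow> 'a set. f 0 = K \<and> f (card (L - K)) = L \<and>
        (\<forall>i\<le>card (L - K). f i \<in> F) \<and>
        (\<forall>i<card (L - K). \<exists>q. q \<notin> f i \<and> f (Suc i) = insert q (f i))"
      by (intro main[of L "card (L - K)", rule_format]) auto
  qed
qed

lemma uc_L2:
  assumes u: "union_closed F"
  shows "axiom_L2 F"
  unfolding axiom_L2_def
proof (intro ballI allI impI)
  fix K L q assume K: "K \<in> F" and L: "L \<in> F" and h: "K \<subset> L \<and> q \<notin> K \<and> insert q K \<in> F"
  have "\<Union>{L, insert q K} \<in> F" using u[unfolded union_closed_def, rule_format, of "{L, insert q K}"] h L by auto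
  moreover have "\<Union>{L, insert q K} = insert q L" using h by auto
  ultimately show "insert q L \<in> F" by simp
qed



lemma class_wgb:
  assumes w: "wgb F"
  shows "wgb (equiv_class F Q' K)"
  unfolding wgb_def
proof (intro ballI impI)
  fix A B assume A: "A \<in> equiv_class F Q' K" and B: "B \<in> equiv_class F Q' K" and ne: "A \<noteq> B"
  have AF: "A \<in> F" "B \<in> F" and tr: "A \<inter> Q' = K \<inter> Q'" "B \<inter> Q' = K \<inter> Q'"
    using A B by (auto simp: equiv_class_def)
  from w[unfolded wgb_def, rule_format, OF AF ne] obtain y where y: "y \<in> sd A B" "sd A {y} \<in> F"
    by blast
  have "y \<notin> Q'" using y(1) tr by (auto simp: sd_def)
  hence "sd A {y} \<inter> Q' = K \<inter> Q'" using tr by (auto simp: sd_def)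
  hence "sd A {y} \<in> equiv_class F Q' K" using y(2) by (simp add: equiv_class_def)
  thus "\<exists>y\<in>sd A B. sd A {y} \<in> equiv_class F Q' K" using y(1) by blast
qed

lemma child_wgb:
  assumes w: "wgb F"
  shows "wgb (child F Q' K)"
  unfolding wgb_def
proof (intro ballI impI)
  let ?E = "equiv_class F Q' K"
  let ?C = "\<Inter>?E"
  fix A' B' assume A': "A' \<in> child F Q' K" and B': "B' \<in> child F Q' K" and ne: "A' \<noteq> B'"
  obtain A B where A: "A \<in> ?E" "A' = A - ?C" and B: "B \<in> ?E" "B' = B - ?C"
    using A' B' unfolding child_def by blast
  have CA: "?C \<subseteq> A" "?C \<subseteq> B" using A B by (auto intro: Inter_lower)
  have "A \<noteq> B" using ne A B by blast
  from class_wgb[OF w, unfolded wgb_def, rule_format, OF A(1) B(1) this]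
  obtain y where y: "y \<in> sd A B" "sd A {y} \<in> ?E" by blast
  have yC: "y \<notin> ?C" using y(1) CA by (auto simp: sd_def)
  have "y \<in> sd A' B'" using y(1) yC A B by (auto simp: sd_def)
  moreover have "sd A' {y} = sd A {y} - ?C" using yC A by (auto simp: sd_def)
  hence "sd A' {y} \<in> child F Q' K" using y(2) unfolding child_def by blast
  ultimately show "\<exists>y\<in>sd A' B'. sd A' {y} \<in> child F Q' K" by blast
qed

lemma child_uc:
  assumes u: "union_closed F"
  shows "union_closed (child F Q' K)"
  unfolding union_closed_def
proof (intro allI impI)
  let ?E = "equiv_class F Q' K"
  let ?C = "\<Inter>?E"
  fix S assume "S \<subseteq> child F Q' K \<and> S \<noteq> {}"
  hence S: "S \<subseteq> child F Q' K" "S \<noteq> {}" by auto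
  define T where "T = {L \<in> ?E. L - ?C \<in> S}"
  have TS: "S = (\<lambda>L. L - ?C) ` T" using S(1) unfolding T_def child_def by blast
  have TE: "T \<subseteq> ?E" unfolding T_def by blast
  hence TF: "T \<subseteq> F" unfolding equiv_class_def by blast
  have Tne: "T \<noteq> {}" using TS S(2) by blast
  have UF: "\<Union>T \<in> F" using u[unfolded union_closed_def, rule_format, of T] TF Tne by blast
  have "\<Union>T \<inter> Q' = K \<inter> Q'"
  proof
    show "\<Union>T \<inter> Q' \<subseteq> K \<inter> Q'" using TE unfolding equiv_class_def by blast
    obtain L where "L \<in> T" using Tne by blast
    hence "L \<inter> Q' = K \<inter> Q'" using TE unfolding equiv_class_def by blast
    thus "K \<inter> Q' \<subseteq> \<Union>T \<inter> Q'" using \<open>L \<in> T\<close> by blast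
  qed
  hence UE: "\<Union>T \<in> ?E" using UF unfolding equiv_class_def by blast
  have "\<Union>S = \<Union>T - ?C" using TS by blast
  thus "\<Union>S \<in> child F Q' K" using UE unfolding child_def by blast
qed

lemma proj_uc:
  assumes u: "union_closed F"
  shows "union_closed (projection F Q')"
  unfolding union_closed_def
proof (intro allI impI)
  fix S assume "S \<subseteq> projection F Q' \<and> S \<noteq> {}"
  hence S: "S \<subseteq> projection F Q'" "S \<noteq> {}" by auto
  define T where "T = {L \<in> F. L \<inter> Q' \<in> S}"
  have TS: "S = (\<lambda>L. L \<inter> Q') ` T" using S(1) unfolding T_def projection_def by blast
  have TF: "T \<subseteq> F" unfolding T_def by blast
  have Tne: "T \<noteq> {}" using TS S(2) by blast
  have UF: "\<Union>T \<in> F" using u[unfolded union_closed_def, rule_format, of T] TF Tne by blast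
  have "\<Union>S = \<Union>T \<inter> Q'" using TS by blast
  thus "\<Union>S \<in> projection F Q'" using UF unfolding projection_def by blast
qed

lemma proj_step:
  assumes w: "wgb F" and fin: "\<forall>X\<in>F. finite X"
  shows "\<forall>K. K \<in> F \<longrightarrow> L \<in> F \<longrightarrow> sdist K L = n \<longrightarrow> K \<inter> Q' \<noteq> L \<inter> Q' \<longrightarrow>
    (\<exists>y\<in>sd (K \<inter> Q') (L \<inter> Q'). sd (K \<inter> Q') {y} \<in> projection F Q')"
proof (induction n)
  case 0
  show ?case
  proof (intro allI impI)
    fix K assume "K \<in> F" "L \<in> F" "sdist K L = 0" "K \<inter> Q' \<noteq> L \<inter> Q'"
    thus "\<exists>y\<in>sd (K \<inter> Q') (L \<inter> Q'). sd (K \<inter> Q') {y} \<in> projection F Q'"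
      using sdist_zero_iff fin by blast
  qed
next
  case (Suc m)
  show ?case
  proof (intro allI impI)
    fix K assume K: "K \<in> F" and L: "L \<in> F" and d: "sdist K L = Suc m" and tr: "K \<inter> Q' \<noteq> L \<inter> Q'"
    hence ne: "K \<noteq> L" by blast
    from w[unfolded wgb_def, rule_format, OF K L ne] obtain y where y: "y \<in> sd K L" "sd K {y} \<in> F"
      by blast
    show "\<exists>y\<in>sd (K \<inter> Q') (L \<inter> Q'). sd (K \<inter> Q') {y} \<in> projection F Q'"
    proof (cases "y \<in> Q'")
      case True
      have "y \<in> sd (K \<inter> Q') (L \<inter> Q')" using True y(1) by (auto simp: sd_def)
      moreover have "sd (K \<inter> Q') {y} = sd K {y} \<inter> Q'" using True by (auto simp: sd_def)
      hence "sd (K \<inter> Q') {y} \<in> projection F Q'" using y(2) unfolding projection_def by blast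
      ultimately show ?thesis by blast
    next
      case False
      hence eq: "sd K {y} \<inter> Q' = K \<inter> Q'" by (auto simp: sd_def)
      have "sdist (sd K {y}) L = m" using sdist_step_in[OF _ _ y(1)] fin K L d by simp
      from Suc.IH[rule_format, OF y(2) L this] tr eq
      show ?thesis by simp
    qed
  qed
qed

lemma proj_wgb:
  assumes w: "wgb F" and fin: "\<forall>X\<in>F. finite X"
  shows "wgb (projection F Q')"
  unfolding wgb_def
proof (intro ballI impI)
  fix A B assume A: "A \<in> projection F Q'" and B: "B \<in> projection F Q'" and ne: "A \<noteq> B"
  obtain K L where K: "K \<in> F" "A = K \<inter> Q'" and L: "L \<in> F" "B = L \<inter> Q'"
    using A B unfolding projection_def by blast
  show "\<exists>y\<in>sd A B. sd A {y} \<in> projection F Q'"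
    using proj_step[OF w fin, rule_format, OF K(1) L(1) refl] ne K L by simp
qed



theorem mainTheorem5:
  fixes F :: "'a set set" and Q Q' :: "'a set"
  assumes "Q = \<Union>F" and "finite Q" and "card Q \<ge> 2"
    and "Q' \<subset> Q" and "Q' \<noteq> {}"
  shows "(learning_space F \<longrightarrow> learning_space (projection F Q'))
       \<and> (well_graded F \<and> union_closed F \<longrightarrow>
            well_graded (projection F Q') \<and> union_closed (projection F Q'))
       \<and> (learning_space F \<or> (well_graded F \<and> union_closed F) \<longrightarrow>
            (\<forall>K\<in>F. well_graded (child F Q' K) \<and> union_closed (child F Q' K)))"
proof -
  have fin: "\<forall>X\<in>F. finite X" using assms(1,2) by (metis Union_upper finite_subset)
  have fF: "finite F" using assms(1,2) by (simp add: finite_UnionD)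
  have finP: "\<forall>X\<in>projection F Q'. finite X" using fin unfolding projection_def by blast
  have finC: "\<forall>X\<in>child F Q' K. finite X" for K using fin unfolding child_def equiv_class_def by blast
  have LS: "wgb F \<and> union_closed F" if "learning_space F"
  proof -
    have "{} \<in> F" "axiom_L1 F" "axiom_L2 F" using that
      unfolding learning_space_def knowledge_structure_def by auto
    thus ?thesis using ls_wgb ls_union_closed fF fin by blast
  qed
  have WG: "wgb F \<and> union_closed F" if "well_graded F \<and> union_closed F"
    using that wg_imp_wgb fin by blast
  have i: "learning_space (projection F Q')" if ls: "learning_space F"
  proof -
    have e: "{} \<in> F" using ls unfolding learning_space_def knowledge_structure_def by auto
    have "\<Union>(projection F Q') = Q'" using assms(1,4) unfolding projection_def by blast
    moreover have "{} \<in> projection F Q'" using e unfolding projection_def by force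
    ultimately have "knowledge_structure (projection F Q')"
      using assms(5) unfolding knowledge_structure_def by simp
    moreover have "axiom_L1 (projection F Q')"
      using wgb_uc_L1[OF finP proj_wgb] LS[OF ls] fin by blast
    moreover have "axiom_L2 (projection F Q')"
      using uc_L2[OF proj_uc] LS[OF ls] by blast
    ultimately show ?thesis unfolding learning_space_def by blast
  qed
  have ii: "well_graded (projection F Q') \<and> union_closed (projection F Q')"
    if "well_graded F \<and> union_closed F"
    using WG[OF that] wgb_imp_wg[OF finP proj_wgb] proj_uc fin by blast
  have iii: "\<forall>K\<in>F. well_graded (child F Q' K) \<and> union_closed (child F Q' K)"
    if "wgb F \<and> union_closed F"
    using that wgb_imp_wg[OF finC child_wgb] child_uc by blast
  show ?thesis using i ii iii LS WG by blast
qed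

end
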